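(* Let $r'\in\mathbb{C}$ and $\sigma_s^2>0$. Let $s\sim\mathcal{CN}_1(0,\sigma_s^2)$ and $\mathbf{n}'=[n'_1,n'_2]^\top\sim\mathcal{CN}_2(\mathbf{0},I_2)$ be independent, and set $m'_1=s+n'_1$, $m'_2=r's+n'_2$, $\sigma_{m'_2}^2=|r'|^2\sigma_s^2+1$. Define the rectified binaural ratio $$y=\frac{1+\sigma_s^2}{\sigma_s^2}\cdot\frac{m'_2}{m'_1}.$$ Then $y\sim\mathcal{CT}_1\left(r',\ \lambda^2,\ 1\right)$ with $\displaystyle\lambda^2=\frac{\sigma_{m'_2}^2+\sigma_s^2}{\sigma_s^4}$.
   Context: $\mathcal{CN}_p(\mathbf{c},\Sigma)$ denotes the $p$-variate complex circular-symmetric normal distribution with mean $\mathbf{c}$ and covariance $\Sigma$, density $\frac{1}{\pi^p|\Sigma|}\exp\left(-(\mathbf{x}-\mathbf{c})^{\mathrm H}\Sigma^{-1}(\mathbf{x}-\mathbf{c})\right)$; $I_2$ is the $2\times 2$ identity. The univariate complex t-distribution $\mathcal{CT}_1(\mu,\lambda^2,\nu)$ with mean $\mu\in\mathbb{C}$, spread $\lambda^2>0$ and degrees of freedom $\nu>0$ has density $\frac{1}{\pi\lambda^2}\left(1+\frac{|y-\mu|^2}{\nu\lambda^2}\right)^{-(1+\nu)}$ on $\mathbb{C}$. *)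

theory Defs
  imports "HOL-Probability.Probability"
begin

definition cnormal1_density :: "complex \<Rightarrow> real \<Rightarrow> complex \<Rightarrow> real" where
  "cnormal1_density c \<sigma>2 x = 1 / (pi * \<sigma>2) * exp (- ((cmod (x - c))\<^sup>2) / \<sigma>2)"

text \<open>Density of the bivariate circular-symmetric complex normal CN_2(0, I_2) on
  complex x complex (vectors [x1,x2]^T represented as pairs): here |Sigma| = 1 and
  (x - 0)^H I_2^{-1} (x - 0) = |x1|^2 + |x2|^2.\<close>
definition cnormal2_std_density :: "complex \<times> complex \<Rightarrow> real" where
  "cnormal2_std_density x = 1 / (pi ^ 2) * exp (- ((cmod (fst x))\<^sup>2 + (cmod (snd x))\<^sup>2))"

definition ct1_density :: "complex \<Rightarrow> real \<Rightarrow> real \<Rightarrow> complex \<Rightarrow> real" where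
  "ct1_density \<mu> lam2 \<nu> y = 1 / (pi * lam2) * (1 + (cmod (y - \<mu>))\<^sup>2 / (\<nu> * lam2)) powr (- (1 + \<nu>))"

end

theory Submission
  imports Defs
begin

lemma complex_lborel_eq:
  "lborel = distr (lborel \<Otimes>\<^sub>M lborel) borel (\<lambda>(a,b). Complex a b)"
proof (rule lborel_eqI)
  fix l u :: complex
  assume le: "\<And>b. b \<in> Basis \<Longrightarrow> l \<bullet> b \<le> u \<bullet> b"
  have lr: "Re l \<le> Re u" and li: "Im l \<le> Im u" using le[of 1] le[of \<i>] by (auto simp: Basis_complex_def)
  have meas: "(\<lambda>(a,b). Complex a b) \<in> (lborel \<Otimes>\<^sub>M lborel) \<rightarrow>\<^sub>M (borel :: complex measure)"
  proof -
    have "(\<lambda>(a,b). Complex a b) = (\<lambda>p. complex_of_real (fst p) + \<i> * complex_of_real (snd p))"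
      by (auto simp: fun_eq_iff Complex_eq)
    then show ?thesis by simp
  qed
  have pre: "(\<lambda>(a,b). Complex a b) -` box l u \<inter> space (lborel \<Otimes>\<^sub>M lborel) = box (Re l) (Re u) \<times> box (Im l) (Im u)"
    by (auto simp: box_def Basis_complex_def space_pair_measure)
  show "emeasure (distr (lborel \<Otimes>\<^sub>M lborel) borel (\<lambda>(a,b). Complex a b)) (box l u) = (\<Prod>b\<in>Basis. (u - l) \<bullet> b)"
    using lr li
    by (simp add: emeasure_distr[OF meas] pre lborel.emeasure_pair_measure_Times Basis_complex_def ennreal_mult)
qed simp


lemma measurable_Complex[measurable (raw)]:
  assumes "f \<in> borel_measurable M" "g \<in> borel_measurable M"
  shows "(\<lambda>x. Complex (f x) (g x)) \<in> borel_measurable M"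
proof -
  have "(\<lambda>x. Complex (f x) (g x)) = (\<lambda>x. complex_of_real (f x) + \<i> * complex_of_real (g x))"
    by (auto simp: fun_eq_iff Complex_eq)
  then show ?thesis using assms by simp
qed

lemma nn_integral_complex:
  fixes f :: "complex \<Rightarrow> ennreal"
  assumes [measurable]: "f \<in> borel_measurable borel"
  shows "(\<integral>\<^sup>+z. f z \<partial>lborel) = (\<integral>\<^sup>+a. \<integral>\<^sup>+b. f (Complex a b) \<partial>lborel \<partial>lborel)"
proof -
  have m: "(\<lambda>(a,b). Complex a b) \<in> (lborel \<Otimes>\<^sub>M lborel) \<rightarrow>\<^sub>M (borel :: complex measure)"
  proof -
    have "(\<lambda>(a,b). Complex a b) = (\<lambda>p. Complex (fst p) (snd p))" by auto
    then show ?thesis by simp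
  qed
  have "(\<integral>\<^sup>+z. f z \<partial>lborel) = (\<integral>\<^sup>+z. f z \<partial>distr (lborel \<Otimes>\<^sub>M lborel) borel (\<lambda>(a,b). Complex a b))"
    by (subst complex_lborel_eq[symmetric]) simp
  also have "\<dots> = (\<integral>\<^sup>+p. f (case p of (a,b) \<Rightarrow> Complex a b) \<partial>(lborel \<Otimes>\<^sub>M lborel))"
    by (rule nn_integral_distr[OF m]) simp
  also have "\<dots> = (\<integral>\<^sup>+a. \<integral>\<^sup>+b. f (Complex a b) \<partial>lborel \<partial>lborel)"
  proof -
    have m': "(\<lambda>p. f (case p of (a,b) \<Rightarrow> Complex a b)) \<in> borel_measurable (lborel \<Otimes>\<^sub>M lborel)"
      using m by measurable
    show ?thesis using lborel.nn_integral_fst[OF m'] by simp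
  qed
  finally show ?thesis .
qed

lemma nn_integral_complex_mult_Re:
  fixes f :: "complex \<Rightarrow> ennreal"
  assumes [measurable]: "f \<in> borel_measurable borel" and p: "Re \<alpha> \<noteq> 0"
  shows "(\<integral>\<^sup>+z. f (\<alpha> * z) \<partial>lborel) = ennreal (1 / (cmod \<alpha>)\<^sup>2) * (\<integral>\<^sup>+z. f z \<partial>lborel)"
proof -
  define p q where "p = Re \<alpha>" and "q = Im \<alpha>"
  have n2: "(cmod \<alpha>)\<^sup>2 = p\<^sup>2 + q\<^sup>2" by (simp add: p_def q_def cmod_power2)
  have pos: "(cmod \<alpha>)\<^sup>2 > 0" using p by (auto simp: n2 p_def intro!: add_pos_nonneg)
  have "(\<integral>\<^sup>+z. f (\<alpha> * z) \<partial>lborel) = (\<integral>\<^sup>+a. \<integral>\<^sup>+b. f (Complex (p*a - q*b) (q*a + p*b)) \<partial>lborel \<partial>lborel)"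
    by (subst nn_integral_complex) (auto simp: p_def q_def Complex_eq intro!: nn_integral_cong arg_cong[where f=f] complex_eqI)
  also have "\<dots> = (\<integral>\<^sup>+b. \<integral>\<^sup>+a. f (Complex (p*a - q*b) (q*a + p*b)) \<partial>lborel \<partial>lborel)"
    by (rule lborel_pair.Fubini') simp
  also have "\<dots> = (\<integral>\<^sup>+b. ennreal (1/\<bar>p\<bar>) * \<integral>\<^sup>+u. f (Complex u ((q*u + (cmod \<alpha>)\<^sup>2 * b)/p)) \<partial>lborel \<partial>lborel)"
  proof (rule nn_integral_cong)
    fix b :: real
    show "(\<integral>\<^sup>+a. f (Complex (p*a - q*b) (q*a + p*b)) \<partial>lborel) = ennreal (1/\<bar>p\<bar>) * \<integral>\<^sup>+u. f (Complex u ((q*u + (cmod \<alpha>)\<^sup>2 * b)/p)) \<partial>lborel"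
      using p unfolding p_def[symmetric] n2
      by (subst nn_integral_real_affine[where c="1/p" and t="q*b/p"])
         (auto simp: n2 field_simps power2_eq_square intro!: nn_integral_cong arg_cong[where f=f])
  qed
  also have "\<dots> = ennreal (1/\<bar>p\<bar>) * (\<integral>\<^sup>+b. \<integral>\<^sup>+u. f (Complex u ((q*u + (cmod \<alpha>)\<^sup>2 * b)/p)) \<partial>lborel \<partial>lborel)"
    by (rule nn_integral_cmult) simp
  also have "(\<integral>\<^sup>+b. \<integral>\<^sup>+u. f (Complex u ((q*u + (cmod \<alpha>)\<^sup>2 * b)/p)) \<partial>lborel \<partial>lborel)
     = (\<integral>\<^sup>+u. \<integral>\<^sup>+b. f (Complex u ((q*u + (cmod \<alpha>)\<^sup>2 * b)/p)) \<partial>lborel \<partial>lborel)"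
    by (rule lborel_pair.Fubini') simp
  also have "\<dots> = (\<integral>\<^sup>+u. ennreal (\<bar>p\<bar> / (cmod \<alpha>)\<^sup>2) * \<integral>\<^sup>+v. f (Complex u v) \<partial>lborel \<partial>lborel)"
  proof (rule nn_integral_cong)
    fix u :: real
    show "(\<integral>\<^sup>+b. f (Complex u ((q*u + (cmod \<alpha>)\<^sup>2 * b)/p)) \<partial>lborel) = ennreal (\<bar>p\<bar> / (cmod \<alpha>)\<^sup>2) * \<integral>\<^sup>+v. f (Complex u v) \<partial>lborel"
      using p pos unfolding p_def[symmetric]
      by (subst nn_integral_real_affine[where c="p / (cmod \<alpha>)\<^sup>2" and t="- q*u / (cmod \<alpha>)\<^sup>2"])
         (auto simp: abs_div field_simps intro!: nn_integral_cong arg_cong[where f=f])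
  qed
  also have "\<dots> = ennreal (\<bar>p\<bar> / (cmod \<alpha>)\<^sup>2) * (\<integral>\<^sup>+u. \<integral>\<^sup>+v. f (Complex u v) \<partial>lborel \<partial>lborel)"
    by (rule nn_integral_cmult) simp
  also have "(\<integral>\<^sup>+u. \<integral>\<^sup>+v. f (Complex u v) \<partial>lborel \<partial>lborel) = (\<integral>\<^sup>+z. f z \<partial>lborel)"
    by (subst nn_integral_complex) auto
  finally show ?thesis
    using p pos unfolding p_def[symmetric]
    by (simp add: mult.assoc[symmetric] ennreal_mult''[symmetric])
qed


lemma nn_integral_plus_lborel:
  fixes f :: "'b::euclidean_space \<Rightarrow> ennreal"
  assumes [measurable]: "f \<in> borel_measurable borel"
  shows "(\<integral>\<^sup>+z. f (c + z) \<partial>lborel) = (\<integral>\<^sup>+z. f z \<partial>lborel)"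
proof -
  have "(\<integral>\<^sup>+z. f z \<partial>lborel) = (\<integral>\<^sup>+z. f z \<partial>distr lborel borel ((+) c))"
    by (simp add: lborel_distr_plus)
  also have "\<dots> = (\<integral>\<^sup>+z. f (c + z) \<partial>lborel)"
    by (rule nn_integral_distr) auto
  finally show ?thesis ..
qed

lemma nn_integral_complex_mult:
  fixes f :: "complex \<Rightarrow> ennreal"
  assumes [measurable]: "f \<in> borel_measurable borel" and a: "\<alpha> \<noteq> 0"
  shows "(\<integral>\<^sup>+z. f (\<alpha> * z) \<partial>lborel) = ennreal (1 / (cmod \<alpha>)\<^sup>2) * (\<integral>\<^sup>+z. f z \<partial>lborel)"
proof (cases "Re \<alpha> = 0")
  case False then show ?thesis using nn_integral_complex_mult_Re by simp
next
  case True
  define \<gamma> :: complex where "\<gamma> = 1 + \<i>"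
  define \<beta> where "\<beta> = \<alpha> / \<gamma>"
  have g: "Re \<gamma> \<noteq> 0" "\<gamma> \<noteq> 0" by (auto simp: \<gamma>_def complex_eq_iff)
  have ab: "\<alpha> = \<beta> * \<gamma>" using g by (simp add: \<beta>_def)
  have "Im \<alpha> \<noteq> 0" using a True complex_eqI by force
  then have b: "Re \<beta> \<noteq> 0" using True by (simp add: \<beta>_def \<gamma>_def Re_divide)
  have "(\<integral>\<^sup>+z. f (\<alpha> * z) \<partial>lborel) = (\<integral>\<^sup>+z. f (\<beta> * (\<gamma> * z)) \<partial>lborel)"
    by (simp add: ab mult.assoc)
  also have "\<dots> = ennreal (1 / (cmod \<gamma>)\<^sup>2) * (\<integral>\<^sup>+z. f (\<beta> * z) \<partial>lborel)"
    by (rule nn_integral_complex_mult_Re[where f="\<lambda>z. f (\<beta> * z)"]) (use g in auto)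
  also have "\<dots> = ennreal (1 / (cmod \<gamma>)\<^sup>2) * (ennreal (1 / (cmod \<beta>)\<^sup>2) * (\<integral>\<^sup>+z. f z \<partial>lborel))"
    by (subst nn_integral_complex_mult_Re[OF _ b]) auto
  also have "\<dots> = ennreal (1 / (cmod \<alpha>)\<^sup>2) * (\<integral>\<^sup>+z. f z \<partial>lborel)"
    by (simp add: ab mult.assoc[symmetric] ennreal_mult''[symmetric] norm_mult power_mult_distrib mult.commute[of "(cmod \<gamma>)\<^sup>2"])
  finally show ?thesis .
qed

lemma nn_integral_complex_affine:
  fixes f :: "complex \<Rightarrow> ennreal"
  assumes [measurable]: "f \<in> borel_measurable borel" and a: "\<alpha> \<noteq> 0"
  shows "(\<integral>\<^sup>+z. f (\<alpha> * z + \<beta>) \<partial>lborel) = ennreal (1 / (cmod \<alpha>)\<^sup>2) * (\<integral>\<^sup>+z. f z \<partial>lborel)"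
proof -
  have "(\<integral>\<^sup>+z. f (\<alpha> * z + \<beta>) \<partial>lborel) = ennreal (1 / (cmod \<alpha>)\<^sup>2) * (\<integral>\<^sup>+z. f (z + \<beta>) \<partial>lborel)"
    by (rule nn_integral_complex_mult[where f="\<lambda>z. f (z + \<beta>)", OF _ a]) simp
  also have "(\<integral>\<^sup>+z. f (z + \<beta>) \<partial>lborel) = (\<integral>\<^sup>+z. f z \<partial>lborel)"
    using nn_integral_plus_lborel[of f \<beta>] by (simp add: add.commute)
  finally show ?thesis .
qed



lemma gauss_real:
  fixes a :: real assumes a: "a > 0"
  shows "(\<integral>\<^sup>+x. ennreal (exp (- a * x\<^sup>2)) \<partial>lborel) = ennreal (sqrt (pi / a))"
proof -
  define \<sigma> where "\<sigma> = sqrt (1 / (2 * a))"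
  have s: "\<sigma> > 0" using a by (simp add: \<sigma>_def)
  have s2: "\<sigma>\<^sup>2 = 1 / (2 * a)" using a by (simp add: \<sigma>_def)
  have eq: "exp (- a * x\<^sup>2) = sqrt (pi / a) * normal_density 0 \<sigma> x" for x
  proof -
    have "sqrt (2 * pi * \<sigma>\<^sup>2) = sqrt (pi / a)" using a by (simp add: s2)
    moreover have "- x\<^sup>2 / (2 * \<sigma>\<^sup>2) = - a * x\<^sup>2" using a by (simp add: s2)
    ultimately show ?thesis using a by (simp add: normal_density_def)
  qed
  have "(\<integral>\<^sup>+x. ennreal (exp (- a * x\<^sup>2)) \<partial>lborel) = (\<integral>\<^sup>+x. ennreal (sqrt (pi / a)) * ennreal (normal_density 0 \<sigma> x) \<partial>lborel)"
    using a by (intro nn_integral_cong, subst eq, intro ennreal_mult) auto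
  also have "\<dots> = ennreal (sqrt (pi / a)) * (\<integral>\<^sup>+x. ennreal (normal_density 0 \<sigma> x) \<partial>lborel)"
    by (rule nn_integral_cmult) simp
  also have "(\<integral>\<^sup>+x. ennreal (normal_density 0 \<sigma> x) \<partial>lborel) = 1"
    using integrable_normal_density[OF s] integral_normal_density[OF s] by (subst nn_integral_eq_integral) auto
  finally show ?thesis by simp
qed

lemma gauss_real_moment2:
  fixes a :: real assumes a: "a > 0"
  shows "(\<integral>\<^sup>+x. ennreal (x\<^sup>2 * exp (- a * x\<^sup>2)) \<partial>lborel) = ennreal (sqrt (pi / a) / (2 * a))"
proof -
  define \<sigma> where "\<sigma> = sqrt (1 / (2 * a))"
  have s: "\<sigma> > 0" using a by (simp add: \<sigma>_def)
  have s2: "\<sigma>\<^sup>2 = 1 / (2 * a)" using a by (simp add: \<sigma>_def)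
  have eq: "x\<^sup>2 * exp (- a * x\<^sup>2) = sqrt (pi / a) * (normal_density 0 \<sigma> x * (x - 0) ^ (2 * 1))" for x
  proof -
    have "sqrt (2 * pi * \<sigma>\<^sup>2) = sqrt (pi / a)" using a by (simp add: s2)
    moreover have "- x\<^sup>2 / (2 * \<sigma>\<^sup>2) = - a * x\<^sup>2" using a by (simp add: s2)
    ultimately show ?thesis using a by (simp add: normal_density_def)
  qed
  have "(\<integral>\<^sup>+x. ennreal (x\<^sup>2 * exp (- a * x\<^sup>2)) \<partial>lborel) = (\<integral>\<^sup>+x. ennreal (sqrt (pi / a)) * ennreal (normal_density 0 \<sigma> x * (x - 0) ^ (2 * 1)) \<partial>lborel)"
    using a by (intro nn_integral_cong, subst eq, intro ennreal_mult) auto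
  also have "\<dots> = ennreal (sqrt (pi / a)) * (\<integral>\<^sup>+x. ennreal (normal_density 0 \<sigma> x * (x - 0) ^ (2 * 1)) \<partial>lborel)"
    by (rule nn_integral_cmult) simp
  also have "(\<integral>\<^sup>+x. ennreal (normal_density 0 \<sigma> x * (x - 0) ^ (2 * 1)) \<partial>lborel) = ennreal (\<sigma>\<^sup>2)"
    using integral_normal_moment_even[OF s, of 0 1] integrable_normal_moment[OF s, of 0 "2*1"]
    by (subst nn_integral_eq_integral) (auto simp: power2_eq_square)
  finally show ?thesis using a by (simp add: s2 ennreal_mult''[symmetric])
qed


lemma cmod_Complex_sq: "(cmod (Complex x y))\<^sup>2 = x\<^sup>2 + y\<^sup>2"
  by (simp add: cmod_power2)

lemma gauss_complex:
  fixes a :: real assumes a: "a > 0"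
  shows "(\<integral>\<^sup>+z. ennreal (exp (- a * (cmod z)\<^sup>2)) \<partial>lborel) = ennreal (pi / a)"
proof -
  have "(\<integral>\<^sup>+z. ennreal (exp (- a * (cmod z)\<^sup>2)) \<partial>lborel)
      = (\<integral>\<^sup>+x. \<integral>\<^sup>+y. ennreal (exp (- a * x\<^sup>2)) * ennreal (exp (- a * y\<^sup>2)) \<partial>lborel \<partial>lborel)"
    by (subst nn_integral_complex) (auto simp: cmod_Complex_sq ennreal_mult[symmetric] mult_exp_exp algebra_simps intro!: nn_integral_cong)
  also have "\<dots> = (\<integral>\<^sup>+x. ennreal (exp (- a * x\<^sup>2)) * ennreal (sqrt (pi / a)) \<partial>lborel)"
    by (intro nn_integral_cong) (simp add: nn_integral_cmult gauss_real[OF a, simplified])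
  also have "\<dots> = ennreal (sqrt (pi / a)) * ennreal (sqrt (pi / a))"
    by (simp add: nn_integral_multc gauss_real[OF a, simplified])
  also have "\<dots> = ennreal (pi / a)"
    using a by (simp add: ennreal_mult[symmetric])
  finally show ?thesis .
qed

lemma gauss_complex_moment2:
  fixes a :: real assumes a: "a > 0"
  shows "(\<integral>\<^sup>+z. ennreal ((cmod z)\<^sup>2 * exp (- a * (cmod z)\<^sup>2)) \<partial>lborel) = ennreal (pi / a\<^sup>2)"
proof -
  have pw: "ennreal ((cmod (Complex x y))\<^sup>2 * exp (- a * (cmod (Complex x y))\<^sup>2))
     = ennreal (x\<^sup>2 * exp (- a * x\<^sup>2)) * ennreal (exp (- a * y\<^sup>2))
             + ennreal (exp (- a * x\<^sup>2)) * ennreal (y\<^sup>2 * exp (- a * y\<^sup>2))" for x y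
  proof -
    have "(cmod (Complex x y))\<^sup>2 * exp (- a * (cmod (Complex x y))\<^sup>2)
        = x\<^sup>2 * exp (- a * x\<^sup>2) * exp (- a * y\<^sup>2) + exp (- a * x\<^sup>2) * (y\<^sup>2 * exp (- a * y\<^sup>2))"
    proof -
      have ee: "exp (- a * (x\<^sup>2 + y\<^sup>2)) = exp (- a * x\<^sup>2) * exp (- a * y\<^sup>2)"
        by (simp add: exp_add[symmetric] algebra_simps)
      show ?thesis unfolding cmod_Complex_sq ee by (simp add: algebra_simps)
    qed
    then show ?thesis by (simp add: ennreal_mult[symmetric] ennreal_plus[symmetric] del: ennreal_plus)
  qed
  have "(\<integral>\<^sup>+z. ennreal ((cmod z)\<^sup>2 * exp (- a * (cmod z)\<^sup>2)) \<partial>lborel)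
      = (\<integral>\<^sup>+x. \<integral>\<^sup>+y. ennreal (x\<^sup>2 * exp (- a * x\<^sup>2)) * ennreal (exp (- a * y\<^sup>2))
             + ennreal (exp (- a * x\<^sup>2)) * ennreal (y\<^sup>2 * exp (- a * y\<^sup>2)) \<partial>lborel \<partial>lborel)"
    by (subst nn_integral_complex) (simp_all only: pw, measurable)
  also have "\<dots> = (\<integral>\<^sup>+x. ennreal (x\<^sup>2 * exp (- a * x\<^sup>2)) * ennreal (sqrt (pi / a))
             + ennreal (exp (- a * x\<^sup>2)) * ennreal (sqrt (pi / a) / (2 * a)) \<partial>lborel)"
    by (intro nn_integral_cong) (simp add: nn_integral_add nn_integral_cmult gauss_real[OF a, simplified] gauss_real_moment2[OF a, simplified])
  also have "\<dots> = ennreal (sqrt (pi / a) / (2 * a)) * ennreal (sqrt (pi / a)) + ennreal (sqrt (pi / a)) * ennreal (sqrt (pi / a) / (2 * a))"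
    by (simp add: nn_integral_add nn_integral_multc gauss_real[OF a, simplified] gauss_real_moment2[OF a, simplified])
  also have "\<dots> = ennreal (sqrt (pi / a) / (2 * a) * sqrt (pi / a) + sqrt (pi / a) * (sqrt (pi / a) / (2 * a)))"
    using a by (simp add: ennreal_mult''[symmetric] ennreal_plus[symmetric] del: ennreal_plus)
  also have "sqrt (pi / a) / (2 * a) * sqrt (pi / a) + sqrt (pi / a) * (sqrt (pi / a) / (2 * a)) = pi / a\<^sup>2"
  proof -
    have "sqrt (pi / a) * sqrt (pi / a) = pi / a" using a by simp
    then show ?thesis using a by (simp add: field_simps power2_eq_square)
  qed
  finally show ?thesis .
qed

lemma gauss_complex_linear:
  fixes a :: real and b :: complex assumes a: "a > 0"
  shows "(\<integral>\<^sup>+z. ennreal (exp (- (a * (cmod z)\<^sup>2 - 2 * Re (cnj b * z)))) \<partial>lborel)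
     = ennreal (pi / a * exp ((cmod b)\<^sup>2 / a))"
proof -
  have e: "a * (cmod (b / a + w))\<^sup>2 - 2 * Re (cnj b * (b / a + w)) = a * (cmod w)\<^sup>2 - (cmod b)\<^sup>2 / a" for w
  proof -
    have "a * (cmod (b / a + w))\<^sup>2 - 2 * Re (cnj b * (b / a + w))
       = a * ((Re b / a + Re w)\<^sup>2 + (Im b / a + Im w)\<^sup>2) - 2 * (Re b * (Re b / a + Re w) + Im b * (Im b / a + Im w))"
      by (simp add: cmod_power2 Re_divide_of_real Im_divide_of_real)
    also have "\<dots> = a * ((Re w)\<^sup>2 + (Im w)\<^sup>2) - ((Re b)\<^sup>2 + (Im b)\<^sup>2) / a"
      using a by (simp add: field_simps power2_eq_square)
    finally show ?thesis by (simp add: cmod_power2)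
  qed
  have "(\<integral>\<^sup>+z. ennreal (exp (- (a * (cmod z)\<^sup>2 - 2 * Re (cnj b * z)))) \<partial>lborel)
      = (\<integral>\<^sup>+w. ennreal (exp (- (a * (cmod (b / a + w))\<^sup>2 - 2 * Re (cnj b * (b / a + w))))) \<partial>lborel)"
    by (rule nn_integral_plus_lborel[symmetric]) simp
  also have "\<dots> = (\<integral>\<^sup>+w. ennreal (exp ((cmod b)\<^sup>2 / a)) * ennreal (exp (- a * (cmod w)\<^sup>2)) \<partial>lborel)"
    by (intro nn_integral_cong) (simp only: e, simp add: ennreal_mult[symmetric] mult_exp_exp)
  also have "\<dots> = ennreal (exp ((cmod b)\<^sup>2 / a)) * ennreal (pi / a)"
    by (simp add: nn_integral_cmult gauss_complex[OF a, simplified])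
  finally show ?thesis using a by (simp add: ennreal_mult[symmetric] mult.commute)
qed



lemma expo1:
  fixes x m u r :: complex and \<sigma> :: real
  shows "(cmod x)\<^sup>2 / \<sigma> + (cmod (m - x))\<^sup>2 + (cmod (u - r * x))\<^sup>2
    = (1 / \<sigma> + 1 + (cmod r)\<^sup>2) * (cmod x)\<^sup>2 - 2 * Re (cnj (m + cnj r * u) * x) + (cmod m)\<^sup>2 + (cmod u)\<^sup>2"
  unfolding cmod_power2 by (simp add: power2_eq_square algebra_simps add_divide_distrib)

lemma beta_eq_real:
  fixes \<sigma> R Y P :: real
  assumes s: "\<sigma> > 0" and R: "R \<ge> 0"
  shows "1 + Y / ((1 + \<sigma>) / \<sigma>)\<^sup>2 - (1 + 2 * P / ((1 + \<sigma>) / \<sigma>) + R * Y / ((1 + \<sigma>) / \<sigma>)\<^sup>2) / (1 / \<sigma> + 1 + R)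
     = (Y - 2 * P + R + (R * \<sigma> + 1 + \<sigma>) / \<sigma>\<^sup>2) / ((R * \<sigma> + 1 + \<sigma>) / \<sigma>\<^sup>2 * \<sigma> * ((1 + \<sigma>) / \<sigma>))"
proof -
  define k where "k = (1 + \<sigma>) / \<sigma>"
  define A where "A = 1 / \<sigma> + 1 + R"
  define L where "L = (R * \<sigma> + 1 + \<sigma>) / \<sigma>\<^sup>2"
  have k: "k > 0" using s by (simp add: k_def)
  have A: "A > 0" using s R by (simp add: A_def add_pos_nonneg)
  have AL: "A = L * \<sigma>" using s by (simp add: A_def L_def field_simps power2_eq_square)
  have Lp: "L > 0" using A AL s by (simp add: zero_less_mult_iff)
  have key: "(A - 1) * k\<^sup>2 + (A - R) * Y = k * Y + k * R + k * L"
  proof -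
    have "A - R = k" using s by (simp add: A_def k_def field_simps)
    moreover have "(A - 1) * k = R + L" using s by (simp add: A_def k_def L_def field_simps power2_eq_square)
    ultimately show ?thesis by (simp add: power2_eq_square algebra_simps)
  qed
  have "1 + Y / k\<^sup>2 - (1 + 2 * P / k + R * Y / k\<^sup>2) / A = ((A - 1) * k\<^sup>2 + (A - R) * Y - 2 * P * k) / (A * k\<^sup>2)"
    using k A by (simp add: field_simps power2_eq_square)
  also have "\<dots> = (k * Y + k * R + k * L - 2 * P * k) / (A * k\<^sup>2)" by (simp add: key)
  also have "\<dots> = (Y - 2 * P + R + L) / (L * \<sigma> * k)"
    using k A AL s Lp by (simp add: field_simps power2_eq_square)
  finally show ?thesis by (simp add: k_def A_def L_def)
qed

lemma beta_eq:
  fixes r y :: complex and \<sigma> :: real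
  assumes s: "\<sigma> > 0"
  defines "k \<equiv> (1 + \<sigma>) / \<sigma>" and "L \<equiv> ((cmod r)\<^sup>2 * \<sigma> + 1 + \<sigma>) / \<sigma>\<^sup>2"
    and "A \<equiv> 1 / \<sigma> + 1 + (cmod r)\<^sup>2"
  shows "1 + (cmod y)\<^sup>2 / k\<^sup>2 - (cmod (1 + cnj r * y / k))\<^sup>2 / A = ((cmod (y - r))\<^sup>2 + L) / (L * \<sigma> * k)"
proof -
  define P where "P = Re r * Re y + Im r * Im y"
  have kpos: "k \<noteq> 0" using s by (simp add: k_def)
  have c1: "(cmod (1 + cnj r * y / k))\<^sup>2 = 1 + 2 * P / k + (cmod r)\<^sup>2 * (cmod y)\<^sup>2 / k\<^sup>2"
    unfolding cmod_power2 P_def using kpos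
    by (simp add: Re_divide_of_real Im_divide_of_real power2_eq_square field_simps)
  have c2: "(cmod (y - r))\<^sup>2 = (cmod y)\<^sup>2 - 2 * P + (cmod r)\<^sup>2"
    unfolding cmod_power2 P_def by (simp add: power2_eq_square algebra_simps)
  show ?thesis unfolding c1 c2 unfolding k_def L_def A_def
    by (rule beta_eq_real[OF s zero_le_power2])
qed


lemma cn1_eq: "cnormal1_density 0 s z = 1 / (pi * s) * exp (- (cmod z)\<^sup>2 / s)"
  by (simp add: cnormal1_density_def)

lemma core_inner:
  fixes r y m :: complex and \<sigma> :: real
  assumes s: "\<sigma> > 0"
  defines "k \<equiv> (1 + \<sigma>) / \<sigma>" and "L \<equiv> ((cmod r)\<^sup>2 * \<sigma> + 1 + \<sigma>) / \<sigma>\<^sup>2"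
    and "A \<equiv> 1 / \<sigma> + 1 + (cmod r)\<^sup>2"
  defines "\<beta> \<equiv> ((cmod (y - r))\<^sup>2 + L) / (L * \<sigma> * k)"
  shows "(\<integral>\<^sup>+x. ennreal ((cmod (m / complex_of_real k))\<^sup>2 * (cnormal1_density 0 \<sigma> x * cnormal1_density 0 1 (m - x)
            * cnormal1_density 0 1 (m / complex_of_real k * y - r * x))) \<partial>lborel)
       = ennreal (1 / (k\<^sup>2 * pi\<^sup>2 * \<sigma> * A) * ((cmod m)\<^sup>2 * exp (- \<beta> * (cmod m)\<^sup>2)))"
proof -
  define u where "u = m / complex_of_real k * y"
  define b where "b = m + cnj r * u"
  define C where "C = (cmod (m / complex_of_real k))\<^sup>2 / (pi ^ 3 * \<sigma>) * exp (- ((cmod m)\<^sup>2 + (cmod u)\<^sup>2))"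
  have kp: "k > 0" using s by (simp add: k_def)
  have Ap: "A > 0" using s by (simp add: A_def add_pos_nonneg)
  have Cnn: "C \<ge> 0" using s by (simp add: C_def)
  have pw: "(cmod (m / complex_of_real k))\<^sup>2 * (cnormal1_density 0 \<sigma> x * cnormal1_density 0 1 (m - x)
            * cnormal1_density 0 1 (u - r * x)) = C * exp (- (A * (cmod x)\<^sup>2 - 2 * Re (cnj b * x)))" for x
  proof -
    have "cnormal1_density 0 \<sigma> x * cnormal1_density 0 1 (m - x) * cnormal1_density 0 1 (u - r * x)
        = 1 / (pi ^ 3 * \<sigma>) * exp (- ((cmod x)\<^sup>2 / \<sigma> + (cmod (m - x))\<^sup>2 + (cmod (u - r * x))\<^sup>2))"
      by (simp add: cn1_eq exp_add[symmetric] power3_eq_cube field_simps)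
    also have "\<dots> = 1 / (pi ^ 3 * \<sigma>) * (exp (- ((cmod m)\<^sup>2 + (cmod u)\<^sup>2)) * exp (- (A * (cmod x)\<^sup>2 - 2 * Re (cnj b * x))))"
      unfolding expo1 A_def b_def by (simp add: exp_add[symmetric] algebra_simps)
    finally show ?thesis by (simp add: C_def)
  qed
  have e2: "(cmod m)\<^sup>2 + (cmod u)\<^sup>2 - (cmod b)\<^sup>2 / A = \<beta> * (cmod m)\<^sup>2"
  proof -
    have b': "b = m * (1 + cnj r * y / complex_of_real k)" by (simp add: b_def u_def field_simps)
    have "(cmod m)\<^sup>2 + (cmod u)\<^sup>2 - (cmod b)\<^sup>2 / A
        = (cmod m)\<^sup>2 * (1 + (cmod y)\<^sup>2 / k\<^sup>2 - (cmod (1 + cnj r * y / k))\<^sup>2 / A)"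
    proof -
      have nb: "(cmod b)\<^sup>2 = (cmod m)\<^sup>2 * (cmod (1 + cnj r * y / k))\<^sup>2"
        unfolding b' by (simp add: norm_mult power_mult_distrib)
      have nu: "(cmod u)\<^sup>2 = (cmod m)\<^sup>2 * ((cmod y)\<^sup>2 / k\<^sup>2)"
        using kp unfolding u_def by (simp add: norm_mult norm_divide power_mult_distrib power_divide)
      show ?thesis unfolding nb nu by (simp add: algebra_simps)
    qed
    also have "\<dots> = (cmod m)\<^sup>2 * \<beta>"
      using beta_eq[OF s, of y r] unfolding \<beta>_def k_def L_def A_def by simp
    finally show ?thesis by simp
  qed
  have "(\<integral>\<^sup>+x. ennreal ((cmod (m / complex_of_real k))\<^sup>2 * (cnormal1_density 0 \<sigma> x * cnormal1_density 0 1 (m - x)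
            * cnormal1_density 0 1 (m / complex_of_real k * y - r * x))) \<partial>lborel)
      = (\<integral>\<^sup>+x. ennreal C * ennreal (exp (- (A * (cmod x)\<^sup>2 - 2 * Re (cnj b * x)))) \<partial>lborel)"
    by (intro nn_integral_cong) (simp only: u_def[symmetric] pw ennreal_mult[OF Cnn exp_ge_zero])
  also have "\<dots> = ennreal C * ennreal (pi / A * exp ((cmod b)\<^sup>2 / A))"
    by (subst nn_integral_cmult) (simp_all only: gauss_complex_linear[OF Ap], measurable)
  also have "\<dots> = ennreal (C * (pi / A * exp ((cmod b)\<^sup>2 / A)))"
    using Cnn Ap by (subst ennreal_mult) auto
  also have "C * (pi / A * exp ((cmod b)\<^sup>2 / A)) = 1 / (k\<^sup>2 * pi\<^sup>2 * \<sigma> * A) * ((cmod m)\<^sup>2 * exp (- \<beta> * (cmod m)\<^sup>2))"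
  proof -
    have "exp (- ((cmod m)\<^sup>2 + (cmod u)\<^sup>2)) * exp ((cmod b)\<^sup>2 / A) = exp (- \<beta> * (cmod m)\<^sup>2)"
      using e2 by (simp add: exp_add[symmetric] algebra_simps)
    then show ?thesis
      using kp Ap s unfolding C_def
      by (simp add: norm_divide power_divide field_simps power2_eq_square power3_eq_cube)
  qed
  finally show ?thesis .
qed


lemma core:
  fixes r y :: complex and \<sigma> :: real
  assumes s: "\<sigma> > 0"
  defines "k \<equiv> (1 + \<sigma>) / \<sigma>" and "L \<equiv> ((cmod r)\<^sup>2 * \<sigma> + 1 + \<sigma>) / \<sigma>\<^sup>2"
  shows "(\<integral>\<^sup>+m. \<integral>\<^sup>+x. ennreal ((cmod (m / complex_of_real k))\<^sup>2 * (cnormal1_density 0 \<sigma> x * cnormal1_density 0 1 (m - x)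
            * cnormal1_density 0 1 (m / complex_of_real k * y - r * x))) \<partial>lborel \<partial>lborel)
       = ennreal (ct1_density r L 1 y)"
proof -
  define A where "A = 1 / \<sigma> + 1 + (cmod r)\<^sup>2"
  define \<beta> where "\<beta> = ((cmod (y - r))\<^sup>2 + L) / (L * \<sigma> * k)"
  define c where "c = 1 / (k\<^sup>2 * pi\<^sup>2 * \<sigma> * A)"
  have kp: "k > 0" using s by (simp add: k_def)
  have Ap: "A > 0" using s by (simp add: A_def add_pos_nonneg)
  have Lp: "L > 0" using s by (simp add: L_def add_pos_nonneg add_nonneg_pos)
  have bp: "\<beta> > 0" using s kp Lp by (simp add: \<beta>_def add_nonneg_pos)
  have cp: "c \<ge> 0" using s kp Ap by (simp add: c_def)
  have AL: "A = L * \<sigma>" using s by (simp add: A_def L_def field_simps power2_eq_square)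
  have "(\<integral>\<^sup>+m. \<integral>\<^sup>+x. ennreal ((cmod (m / complex_of_real k))\<^sup>2 * (cnormal1_density 0 \<sigma> x * cnormal1_density 0 1 (m - x)
            * cnormal1_density 0 1 (m / complex_of_real k * y - r * x))) \<partial>lborel \<partial>lborel)
     = (\<integral>\<^sup>+m. ennreal c * ennreal ((cmod m)\<^sup>2 * exp (- \<beta> * (cmod m)\<^sup>2)) \<partial>lborel)"
  proof (intro nn_integral_cong)
    fix m :: complex
    have ci: "(\<integral>\<^sup>+x. ennreal ((cmod (m / complex_of_real k))\<^sup>2 * (cnormal1_density 0 \<sigma> x * cnormal1_density 0 1 (m - x)
            * cnormal1_density 0 1 (m / complex_of_real k * y - r * x))) \<partial>lborel) = ennreal (c * ((cmod m)\<^sup>2 * exp (- \<beta> * (cmod m)\<^sup>2)))"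
      unfolding c_def A_def \<beta>_def L_def k_def by (rule core_inner[OF s])
    show "(\<integral>\<^sup>+x. ennreal ((cmod (m / complex_of_real k))\<^sup>2 * (cnormal1_density 0 \<sigma> x * cnormal1_density 0 1 (m - x)
            * cnormal1_density 0 1 (m / complex_of_real k * y - r * x))) \<partial>lborel) = ennreal c * ennreal ((cmod m)\<^sup>2 * exp (- \<beta> * (cmod m)\<^sup>2))"
      unfolding ci by (rule ennreal_mult[OF cp]) simp
  qed
  also have "\<dots> = ennreal c * ennreal (pi / \<beta>\<^sup>2)"
    by (subst nn_integral_cmult) (simp_all only: gauss_complex_moment2[OF bp], measurable)
  also have "\<dots> = ennreal (c * (pi / \<beta>\<^sup>2))"
    using cp by (subst ennreal_mult) auto
  also have "c * (pi / \<beta>\<^sup>2) = ct1_density r L 1 y"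
  proof -
    define D where "D = (cmod (y - r))\<^sup>2"
    have Dn: "D \<ge> 0" by (simp add: D_def)
    have pw: "(1 + D / (1 * L)) powr (- (1 + 1)) = 1 / (1 + D / L)\<^sup>2"
      using Lp Dn by (simp add: powr_minus_divide powr_realpow add_pos_nonneg)
    have "ct1_density r L 1 y = 1 / (pi * L) * (1 / (1 + D / L)\<^sup>2)"
      unfolding ct1_density_def D_def[symmetric] pw by simp
    also have "\<dots> = c * (pi / \<beta>\<^sup>2)"
      using Lp Dn s kp unfolding c_def \<beta>_def D_def[symmetric] AL
      by (simp add: field_simps power2_eq_square add_pos_nonneg)
    finally show ?thesis ..
  qed
  finally show ?thesis .
qed



lemma measurable_fst_borel[measurable (raw)]:
  fixes g :: "'a \<Rightarrow> 'b::topological_space \<times> 'c::topological_space"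
  shows "g \<in> borel_measurable M \<Longrightarrow> (\<lambda>x. fst (g x)) \<in> borel_measurable M"
  by (rule borel_measurable_continuous_on[OF continuous_on_fst[OF continuous_on_id]])

lemma measurable_snd_borel[measurable (raw)]:
  fixes g :: "'a \<Rightarrow> 'b::topological_space \<times> 'c::topological_space"
  shows "g \<in> borel_measurable M \<Longrightarrow> (\<lambda>x. snd (g x)) \<in> borel_measurable M"
  by (rule borel_measurable_continuous_on[OF continuous_on_snd[OF continuous_on_id]])

lemma cn1_meas[measurable]: "cnormal1_density c s \<in> borel_measurable borel"
  unfolding cnormal1_density_def[abs_def] by measurable

lemma cn2_meas[measurable]: "cnormal2_std_density \<in> borel_measurable borel"
  unfolding cnormal2_std_density_def[abs_def]
  by (intro borel_measurable_continuous_onI continuous_intros)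

lemma ct1_meas[measurable]: "ct1_density \<mu> l n \<in> borel_measurable borel"
  unfolding ct1_density_def[abs_def] by measurable

lemma cn2_eq: "cnormal2_std_density (a, b) = cnormal1_density 0 1 a * cnormal1_density 0 1 b"
  by (simp add: cnormal2_std_density_def cnormal1_density_def exp_add[symmetric] power2_eq_square diff_divide_distrib)

lemma AE_lborel_nonzero: "AE m in (lborel :: complex measure). m \<noteq> 0"
  by (rule AE_I[where N="{0}"]) auto

lemma inner_cov:
  fixes x r :: complex and k :: real and A :: "complex set" and \<sigma> :: real
  assumes k: "k > 0" and A[measurable]: "A \<in> sets borel"
  shows "(\<integral>\<^sup>+n1. \<integral>\<^sup>+n2. ennreal (cnormal1_density 0 \<sigma> x * (cnormal1_density 0 1 n1 * cnormal1_density 0 1 n2))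
            * indicator A (complex_of_real k * ((r * x + n2) / (x + n1))) \<partial>lborel \<partial>lborel)
       = (\<integral>\<^sup>+m. \<integral>\<^sup>+y. ennreal ((cmod (m / complex_of_real k))\<^sup>2 * (cnormal1_density 0 \<sigma> x * cnormal1_density 0 1 (m - x)
            * cnormal1_density 0 1 (m / complex_of_real k * y - r * x))) * indicator A y \<partial>lborel \<partial>lborel)"
proof -
  let ?pS = "cnormal1_density 0 \<sigma>" and ?pN = "cnormal1_density 0 1"
  have "(\<integral>\<^sup>+n1. \<integral>\<^sup>+n2. ennreal (?pS x * (?pN n1 * ?pN n2))
            * indicator A (complex_of_real k * ((r * x + n2) / (x + n1))) \<partial>lborel \<partial>lborel)
      = (\<integral>\<^sup>+m. \<integral>\<^sup>+n2. ennreal (?pS x * (?pN (- x + m) * ?pN n2))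
            * indicator A (complex_of_real k * ((r * x + n2) / (x + (- x + m)))) \<partial>lborel \<partial>lborel)"
    by (rule nn_integral_plus_lborel[symmetric]) measurable
  also have "\<dots> = (\<integral>\<^sup>+m. \<integral>\<^sup>+y. ennreal ((cmod (m / complex_of_real k))\<^sup>2 * (?pS x * ?pN (m - x)
            * ?pN (m / complex_of_real k * y - r * x))) * indicator A y \<partial>lborel \<partial>lborel)"
  proof (rule nn_integral_cong_AE, rule AE_mp[OF AE_lborel_nonzero], intro AE_I2 impI)
    fix m :: complex assume m: "m \<noteq> 0"
    define \<alpha> where "\<alpha> = m / complex_of_real k"
    have a0: "\<alpha> \<noteq> 0" using m k by (simp add: \<alpha>_def)
    define \<Psi> where "\<Psi> = (\<lambda>n2. ennreal (?pS x * (?pN (m - x) * ?pN n2)) * indicator A (complex_of_real k * ((r * x + n2) / m)))"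
    have \<Psi>m[measurable]: "\<Psi> \<in> borel_measurable borel" unfolding \<Psi>_def by measurable
    have \<Psi>a: "\<Psi> (\<alpha> * y + - (r * x)) = ennreal (?pS x * (?pN (m - x) * ?pN (m / complex_of_real k * y - r * x))) * indicator A y" for y
    proof -
      have "complex_of_real k * ((r * x + (\<alpha> * y + - (r * x))) / m) = y"
        using m k by (simp add: \<alpha>_def)
      then show ?thesis unfolding \<Psi>_def by (simp only:) (simp add: \<alpha>_def)
    qed
    have "(\<integral>\<^sup>+y. \<Psi> (\<alpha> * y + - (r * x)) \<partial>lborel) = ennreal (1 / (cmod \<alpha>)\<^sup>2) * (\<integral>\<^sup>+n2. \<Psi> n2 \<partial>lborel)"
      by (rule nn_integral_complex_affine[OF \<Psi>m a0])
    then have "(\<integral>\<^sup>+n2. \<Psi> n2 \<partial>lborel) = ennreal ((cmod \<alpha>)\<^sup>2) * (\<integral>\<^sup>+y. \<Psi> (\<alpha> * y + - (r * x)) \<partial>lborel)"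
      using a0 by (simp add: mult.assoc[symmetric] ennreal_mult''[symmetric])
    also have "\<dots> = (\<integral>\<^sup>+y. ennreal ((cmod \<alpha>)\<^sup>2) * \<Psi> (\<alpha> * y + - (r * x)) \<partial>lborel)"
      by (rule nn_integral_cmult[symmetric]) measurable
    also have "\<dots> = (\<integral>\<^sup>+y. ennreal ((cmod (m / complex_of_real k))\<^sup>2 * (?pS x * ?pN (m - x)
            * ?pN (m / complex_of_real k * y - r * x))) * indicator A y \<partial>lborel)"
      by (intro nn_integral_cong) (simp only: \<Psi>a, subst mult.assoc[symmetric], subst ennreal_mult'[symmetric], simp, simp add: \<alpha>_def mult.assoc)
    finally show "(\<integral>\<^sup>+n2. ennreal (?pS x * (?pN (- x + m) * ?pN n2))
            * indicator A (complex_of_real k * ((r * x + n2) / (x + (- x + m)))) \<partial>lborel) =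
         (\<integral>\<^sup>+y. ennreal ((cmod (m / complex_of_real k))\<^sup>2 * (?pS x * ?pN (m - x)
            * ?pN (m / complex_of_real k * y - r * x))) * indicator A y \<partial>lborel)"
      by (simp add: \<Psi>_def)
  qed
  finally show ?thesis .
qed


lemma swap_G:
  fixes r :: complex and k \<sigma> :: real and A :: "complex set"
  assumes A[measurable]: "A \<in> sets borel"
  defines "G \<equiv> (\<lambda>x m y. ennreal ((cmod (m / complex_of_real k))\<^sup>2 * (cnormal1_density 0 \<sigma> x * cnormal1_density 0 1 (m - x)
            * cnormal1_density 0 1 (m / complex_of_real k * y - r * x))))"
  shows "(\<integral>\<^sup>+x. \<integral>\<^sup>+m. \<integral>\<^sup>+y. G x m y * indicator A y \<partial>lborel \<partial>lborel \<partial>lborel)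
       = (\<integral>\<^sup>+y. (\<integral>\<^sup>+m. \<integral>\<^sup>+x. G x m y \<partial>lborel \<partial>lborel) * indicator A y \<partial>lborel)"
proof -
  have "(\<integral>\<^sup>+x. \<integral>\<^sup>+m. \<integral>\<^sup>+y. G x m y * indicator A y \<partial>lborel \<partial>lborel \<partial>lborel)
      = (\<integral>\<^sup>+x. \<integral>\<^sup>+y. \<integral>\<^sup>+m. G x m y * indicator A y \<partial>lborel \<partial>lborel \<partial>lborel)"
    by (intro nn_integral_cong lborel_pair.Fubini'[symmetric]) (unfold G_def, measurable)
  also have "\<dots> = (\<integral>\<^sup>+y. \<integral>\<^sup>+x. \<integral>\<^sup>+m. G x m y * indicator A y \<partial>lborel \<partial>lborel \<partial>lborel)"
    by (intro lborel_pair.Fubini'[symmetric]) (unfold G_def, measurable)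
  also have "\<dots> = (\<integral>\<^sup>+y. \<integral>\<^sup>+m. \<integral>\<^sup>+x. G x m y * indicator A y \<partial>lborel \<partial>lborel \<partial>lborel)"
    by (intro nn_integral_cong lborel_pair.Fubini'[symmetric]) (unfold G_def, measurable)
  also have "\<dots> = (\<integral>\<^sup>+y. (\<integral>\<^sup>+m. \<integral>\<^sup>+x. G x m y \<partial>lborel \<partial>lborel) * indicator A y \<partial>lborel)"
  proof (intro nn_integral_cong)
    fix y :: complex
    have "(\<integral>\<^sup>+m. \<integral>\<^sup>+x. G x m y * indicator A y \<partial>lborel \<partial>lborel) = (\<integral>\<^sup>+m. (\<integral>\<^sup>+x. G x m y \<partial>lborel) * indicator A y \<partial>lborel)"
      by (intro nn_integral_cong nn_integral_multc) (unfold G_def, measurable)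
    also have "\<dots> = (\<integral>\<^sup>+m. \<integral>\<^sup>+x. G x m y \<partial>lborel \<partial>lborel) * indicator A y"
      by (intro nn_integral_multc) (unfold G_def, measurable)
    finally show "(\<integral>\<^sup>+m. \<integral>\<^sup>+x. G x m y * indicator A y \<partial>lborel \<partial>lborel) = (\<integral>\<^sup>+m. \<integral>\<^sup>+x. G x m y \<partial>lborel \<partial>lborel) * indicator A y" .
  qed
  finally show ?thesis .
qed

theorem mainTheorem3:
  fixes M :: "'a measure"
    and s :: "'a \<Rightarrow> complex"
    and n' :: "'a \<Rightarrow> complex \<times> complex"
    and r' :: complex
    and \<sigma>s2 :: real
  assumes "prob_space M"
    and "\<sigma>s2 > 0"
    and "distributed M lborel s (\<lambda>x. ennreal (cnormal1_density 0 \<sigma>s2 x))"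
    and "distributed M lborel n' (\<lambda>x. ennreal (cnormal2_std_density x))"
    and "\<forall>A \<in> sets (borel :: complex measure). \<forall>B \<in> sets (borel :: (complex \<times> complex) measure).
           measure M ((s -` A \<inter> space M) \<inter> (n' -` B \<inter> space M)) =
           measure M (s -` A \<inter> space M) * measure M (n' -` B \<inter> space M)"
  shows "distributed M lborel
           (\<lambda>\<omega>. complex_of_real ((1 + \<sigma>s2) / \<sigma>s2) *
                  ((r' * s \<omega> + snd (n' \<omega>)) / (s \<omega> + fst (n' \<omega>))))
           (\<lambda>y. ennreal (ct1_density r'
                  (((cmod r')\<^sup>2 * \<sigma>s2 + 1 + \<sigma>s2) / \<sigma>s2\<^sup>2) 1 y))"
proof -
  note sp = assms(1) and s = assms(2)
  interpret prob_space M by (rule sp)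
  let ?pS = "cnormal1_density 0 \<sigma>s2" and ?pN = "cnormal1_density 0 1"
  define k where "k = (1 + \<sigma>s2) / \<sigma>s2"
  define L where "L = ((cmod r')\<^sup>2 * \<sigma>s2 + 1 + \<sigma>s2) / \<sigma>s2\<^sup>2"
  have kp: "k > 0" using s by (simp add: k_def)
  have Ds: "distr M lborel s = density lborel (\<lambda>x. ennreal (?pS x))"
    and sm[measurable]: "s \<in> borel_measurable M"
    using assms(3) by (auto simp: distributed_def)
  have Dn: "distr M lborel n' = density lborel (\<lambda>x. ennreal (cnormal2_std_density x))"
    and nm[measurable]: "n' \<in> borel_measurable M"
    using assms(4) by (auto simp: distributed_def)
  have n1m[measurable]: "(\<lambda>\<omega>. fst (n' \<omega>)) \<in> borel_measurable M"
    by (rule borel_measurable_continuous_on[OF continuous_on_fst[OF continuous_on_id] nm])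
  have n2m[measurable]: "(\<lambda>\<omega>. snd (n' \<omega>)) \<in> borel_measurable M"
    by (rule borel_measurable_continuous_on[OF continuous_on_snd[OF continuous_on_id] nm])
  define h where "h = (\<lambda>p::complex \<times> complex \<times> complex. complex_of_real k * ((r' * fst p + snd (snd p)) / (fst p + fst (snd p))))"
  have Yeq: "(\<lambda>\<omega>. complex_of_real ((1 + \<sigma>s2) / \<sigma>s2) * ((r' * s \<omega> + snd (n' \<omega>)) / (s \<omega> + fst (n' \<omega>))))
      = (\<lambda>\<omega>. h (s \<omega>, n' \<omega>))" by (simp add: h_def k_def)
  have joint: "distr M (lborel \<Otimes>\<^sub>M lborel) (\<lambda>\<omega>. (s \<omega>, n' \<omega>)) = distr M lborel s \<Otimes>\<^sub>M distr M lborel n'"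
  proof (rule pair_measure_eqI[symmetric])
    show "sigma_finite_measure (distr M lborel s)"
      using prob_space_distr[OF distributed_measurable[OF assms(3)]] prob_space_imp_sigma_finite by blast
    show "sigma_finite_measure (distr M lborel n')"
      using prob_space_distr[OF distributed_measurable[OF assms(4)]] prob_space_imp_sigma_finite by blast
    show "sets (distr M lborel s \<Otimes>\<^sub>M distr M lborel n') = sets (distr M (lborel \<Otimes>\<^sub>M lborel) (\<lambda>\<omega>. (s \<omega>, n' \<omega>)))"
      unfolding sets_distr by (rule sets_pair_measure_cong) simp_all
    fix A B assume "A \<in> sets (distr M lborel s)" "B \<in> sets (distr M lborel n')"
    then have A[measurable]: "A \<in> sets borel" and B[measurable]: "B \<in> sets borel" by auto
    have "emeasure (distr M lborel s) A * emeasure (distr M lborel n') B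
        = ennreal (measure M (s -` A \<inter> space M)) * ennreal (measure M (n' -` B \<inter> space M))"
      using A B by (simp only: emeasure_distr[OF distributed_measurable[OF assms(3)]] emeasure_distr[OF distributed_measurable[OF assms(4)]] sets_lborel emeasure_eq_measure)
    also have "\<dots> = ennreal (measure M ((s -` A \<inter> space M) \<inter> (n' -` B \<inter> space M)))"
      using assms(5)[rule_format, OF A B] by (simp add: ennreal_mult[symmetric])
    also have "\<dots> = emeasure (distr M (lborel \<Otimes>\<^sub>M lborel) (\<lambda>\<omega>. (s \<omega>, n' \<omega>))) (A \<times> B)"
    proof -
      have "(\<lambda>\<omega>. (s \<omega>, n' \<omega>)) -` (A \<times> B) \<inter> space M = (s -` A \<inter> space M) \<inter> (n' -` B \<inter> space M)" by auto
      then show ?thesis by (simp add: emeasure_distr emeasure_eq_measure)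
    qed
    finally show "emeasure (distr M lborel s) A * emeasure (distr M lborel n') B = emeasure (distr M (lborel \<Otimes>\<^sub>M lborel) (\<lambda>\<omega>. (s \<omega>, n' \<omega>))) (A \<times> B)" .
  qed
  have joint2: "distr M lborel s \<Otimes>\<^sub>M distr M lborel n'
      = density (lborel \<Otimes>\<^sub>M lborel) (\<lambda>(x, n). ennreal (?pS x) * ennreal (cnormal2_std_density n))"
    unfolding Ds Dn
  proof (rule pair_measure_density)
    show "sigma_finite_measure (lborel :: (complex \<times> complex) measure)" by (rule lborel.sigma_finite_measure_axioms)
    show "sigma_finite_measure (density lborel (\<lambda>x. ennreal (cnormal2_std_density x)))"
      unfolding Dn[symmetric]
      using prob_space_distr[OF distributed_measurable[OF assms(4)]] prob_space_imp_sigma_finite by blast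
  qed simp_all
  have main: "emeasure M ((\<lambda>\<omega>. h (s \<omega>, n' \<omega>)) -` A \<inter> space M) = (\<integral>\<^sup>+y. ennreal (ct1_density r' L 1 y) * indicator A y \<partial>lborel)"
    if A[measurable]: "A \<in> sets borel" for A
  proof -
    have hm[measurable]: "h \<in> borel_measurable (lborel \<Otimes>\<^sub>M lborel)" unfolding h_def by measurable
    have pm: "(\<lambda>\<omega>. (s \<omega>, n' \<omega>)) \<in> M \<rightarrow>\<^sub>M (lborel \<Otimes>\<^sub>M lborel)" by measurable
    have hA: "h -` A \<inter> space (lborel \<Otimes>\<^sub>M lborel) \<in> sets (lborel \<Otimes>\<^sub>M lborel)"
      by (rule measurable_sets[OF hm]) simp
    have pSn: "?pS x \<ge> 0" for x using s by (simp add: cnormal1_density_def)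
    have "emeasure M ((\<lambda>\<omega>. h (s \<omega>, n' \<omega>)) -` A \<inter> space M)
        = emeasure (distr M (lborel \<Otimes>\<^sub>M lborel) (\<lambda>\<omega>. (s \<omega>, n' \<omega>))) (h -` A \<inter> space (lborel \<Otimes>\<^sub>M lborel))"
    proof -
      have "(\<lambda>\<omega>. (s \<omega>, n' \<omega>)) -` (h -` A \<inter> space (lborel \<Otimes>\<^sub>M lborel)) \<inter> space M = (\<lambda>\<omega>. h (s \<omega>, n' \<omega>)) -` A \<inter> space M"
        by (auto simp: space_pair_measure)
      then show ?thesis by (subst emeasure_distr[OF pm hA]) auto
    qed
    also have "\<dots> = (\<integral>\<^sup>+p. (case p of (x, n) \<Rightarrow> ennreal (?pS x) * ennreal (cnormal2_std_density n)) * indicator (h -` A \<inter> space (lborel \<Otimes>\<^sub>M lborel)) p \<partial>(lborel \<Otimes>\<^sub>M lborel))"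
      unfolding joint joint2 using hA by (subst emeasure_density) auto
    also have "\<dots> = (\<integral>\<^sup>+p. (case p of (x, n) \<Rightarrow> ennreal (?pS x) * ennreal (cnormal2_std_density n)) * indicator A (h p) \<partial>(lborel \<Otimes>\<^sub>M lborel))"
      by (intro nn_integral_cong) (auto simp: space_pair_measure split: split_indicator)
    also have "\<dots> = (\<integral>\<^sup>+x. \<integral>\<^sup>+n. ennreal (?pS x) * ennreal (cnormal2_std_density n) * indicator A (h (x, n)) \<partial>lborel \<partial>lborel)"
    proof -
      have m': "(\<lambda>p. (case p of (x, n) \<Rightarrow> ennreal (?pS x) * ennreal (cnormal2_std_density n)) * indicator A (h p)) \<in> borel_measurable (lborel \<Otimes>\<^sub>M lborel)"
        by measurable
      show ?thesis using lborel.nn_integral_fst[OF m'] by simp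
    qed
    also have "\<dots> = (\<integral>\<^sup>+x. \<integral>\<^sup>+n1. \<integral>\<^sup>+n2. ennreal (?pS x * (?pN n1 * ?pN n2))
            * indicator A (complex_of_real k * ((r' * x + n2) / (x + n1))) \<partial>lborel \<partial>lborel \<partial>lborel)"
    proof (intro nn_integral_cong)
      fix x :: complex
      have "(\<integral>\<^sup>+n. ennreal (?pS x) * ennreal (cnormal2_std_density n) * indicator A (h (x, n)) \<partial>lborel)
          = (\<integral>\<^sup>+n. ennreal (?pS x * (?pN (fst n) * ?pN (snd n))) * indicator A (complex_of_real k * ((r' * x + snd n) / (x + fst n))) \<partial>lborel)"
      proof (intro nn_integral_cong)
        fix n :: "complex \<times> complex"
        have "cnormal2_std_density n = ?pN (fst n) * ?pN (snd n)" using cn2_eq[of "fst n" "snd n"] by simp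
        then show "ennreal (?pS x) * ennreal (cnormal2_std_density n) * indicator A (h (x, n)) =
            ennreal (?pS x * (?pN (fst n) * ?pN (snd n))) * indicator A (complex_of_real k * ((r' * x + snd n) / (x + fst n)))"
          by (simp add: h_def ennreal_mult'[OF pSn])
      qed
      also have "\<dots> = (\<integral>\<^sup>+n. ennreal (?pS x * (?pN (fst n) * ?pN (snd n))) * indicator A (complex_of_real k * ((r' * x + snd n) / (x + fst n))) \<partial>(lborel \<Otimes>\<^sub>M lborel))"
        by (simp add: lborel_prod)
      also have "\<dots> = (\<integral>\<^sup>+n1. \<integral>\<^sup>+n2. ennreal (?pS x * (?pN n1 * ?pN n2))
            * indicator A (complex_of_real k * ((r' * x + n2) / (x + n1))) \<partial>lborel \<partial>lborel)"
      proof -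
        have m': "(\<lambda>n. ennreal (?pS x * (?pN (fst n) * ?pN (snd n))) * indicator A (complex_of_real k * ((r' * x + snd n) / (x + fst n)))) \<in> borel_measurable (lborel \<Otimes>\<^sub>M lborel)"
          by measurable
        show ?thesis using lborel.nn_integral_fst[OF m'] by simp
      qed
      finally show "(\<integral>\<^sup>+n. ennreal (?pS x) * ennreal (cnormal2_std_density n) * indicator A (h (x, n)) \<partial>lborel) =
          (\<integral>\<^sup>+n1. \<integral>\<^sup>+n2. ennreal (?pS x * (?pN n1 * ?pN n2))
            * indicator A (complex_of_real k * ((r' * x + n2) / (x + n1))) \<partial>lborel \<partial>lborel)" .
    qed
    also have "\<dots> = (\<integral>\<^sup>+x. \<integral>\<^sup>+m. \<integral>\<^sup>+y. ennreal ((cmod (m / complex_of_real k))\<^sup>2 * (?pS x * ?pN (m - x)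
            * ?pN (m / complex_of_real k * y - r' * x))) * indicator A y \<partial>lborel \<partial>lborel \<partial>lborel)"
      by (intro nn_integral_cong inner_cov[OF kp A])
    also have "\<dots> = (\<integral>\<^sup>+y. (\<integral>\<^sup>+m. \<integral>\<^sup>+x. ennreal ((cmod (m / complex_of_real k))\<^sup>2 * (?pS x * ?pN (m - x)
            * ?pN (m / complex_of_real k * y - r' * x))) \<partial>lborel \<partial>lborel) * indicator A y \<partial>lborel)"
      by (rule swap_G[OF A])
    also have "\<dots> = (\<integral>\<^sup>+y. ennreal (ct1_density r' L 1 y) * indicator A y \<partial>lborel)"
      by (intro nn_integral_cong) (simp only: k_def L_def core[OF s])
    finally show ?thesis .
  qed
  show ?thesis
    unfolding Yeq distributed_def L_def[symmetric]
  proof (intro conjI)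
    show "(\<lambda>y. ennreal (ct1_density r' L 1 y)) \<in> borel_measurable lborel" by simp
    show "(\<lambda>\<omega>. h (s \<omega>, n' \<omega>)) \<in> M \<rightarrow>\<^sub>M lborel" unfolding h_def by simp
    show "distr M lborel (\<lambda>\<omega>. h (s \<omega>, n' \<omega>)) = density lborel (\<lambda>y. ennreal (ct1_density r' L 1 y))"
    proof (rule measure_eqI)
      fix A assume "A \<in> sets (distr M lborel (\<lambda>\<omega>. h (s \<omega>, n' \<omega>)))"
      then have A[measurable]: "A \<in> sets borel" by simp
      have "emeasure (distr M lborel (\<lambda>\<omega>. h (s \<omega>, n' \<omega>))) A = emeasure M ((\<lambda>\<omega>. h (s \<omega>, n' \<omega>)) -` A \<inter> space M)"
        by (rule emeasure_distr) (auto simp: h_def)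
      also have "\<dots> = emeasure (density lborel (\<lambda>y. ennreal (ct1_density r' L 1 y))) A"
        by (simp add: main emeasure_density)
      finally show "emeasure (distr M lborel (\<lambda>\<omega>. h (s \<omega>, n' \<omega>))) A = emeasure (density lborel (\<lambda>y. ennreal (ct1_density r' L 1 y))) A" .
    qed simp
  qed
qed


end
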